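(* For any causal order $\Omega$ on a finite set $E$ and any family $\underline{I}=(I_\omega)_{\omega\in E}$ of non-empty finite sets, $\mathrm{Hist}(\Omega,\underline I)$ is a $\vee$-prime subset of the set of partial functions on $\underline I$.
   Context: A causal order $\Omega$ on $E$ is a preorder $\le_\Omega$; $\downarrow\omega=\{\xi:\xi\le_\Omega\omega\}$. Partial functions on $\underline I$: functions $f$ with $\mathrm{dom}(f)\subseteq E$ and $f(\omega)\in I_\omega$. $\mathrm{Hist}(\Omega,\underline I)=\bigcup_{\xi\in E}\prod_{\omega\in\downarrow\xi}I_\omega$. Two partial functions are compatible if they agree on the intersection of their domains; a compatible set $\mathcal F$ has join $\bigvee\mathcal F$, the partial function on $\bigcup_{f\in\mathcal F}\mathrm{dom}(f)$ extending every member. A set $\Theta$ of partial functions is $\vee$-prime if for every compatible $\mathcal F\subseteq\Theta$ with $\bigvee\mathcal F\in\Theta$ we have $\bigvee\mathcal F\in\mathcal F$. *)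

theory Defs
  imports Main
begin

definition causal_order :: "'a set \<Rightarrow> ('a \<Rightarrow> 'a \<Rightarrow> bool) \<Rightarrow> bool" where
  "causal_order E le \<longleftrightarrow>
     (\<forall>x\<in>E. le x x) \<and> (\<forall>x\<in>E. \<forall>y\<in>E. \<forall>z\<in>E. le x y \<longrightarrow> le y z \<longrightarrow> le x z)"

definition down :: "'a set \<Rightarrow> ('a \<Rightarrow> 'a \<Rightarrow> bool) \<Rightarrow> 'a \<Rightarrow> 'a set" where
  "down E le w = {x \<in> E. le x w}"

definition partial_funs :: "'a set \<Rightarrow> ('a \<Rightarrow> 'b set) \<Rightarrow> ('a \<rightharpoonup> 'b) set" where
  "partial_funs E I = {f. dom f \<subseteq> E \<and> (\<forall>w\<in>dom f. the (f w) \<in> I w)}"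

definition Hist :: "'a set \<Rightarrow> ('a \<Rightarrow> 'a \<Rightarrow> bool) \<Rightarrow> ('a \<Rightarrow> 'b set) \<Rightarrow> ('a \<rightharpoonup> 'b) set" where
  "Hist E le I = (\<Union>xi\<in>E. {h. dom h = down E le xi \<and> (\<forall>w\<in>dom h. the (h w) \<in> I w)})"

definition compatible :: "('a \<rightharpoonup> 'b) set \<Rightarrow> bool" where
  "compatible F \<longleftrightarrow> (\<forall>f\<in>F. \<forall>g\<in>F. \<forall>x\<in>dom f \<inter> dom g. f x = g x)"

definition join :: "('a \<rightharpoonup> 'b) set \<Rightarrow> ('a \<rightharpoonup> 'b)" where
  "join F = (\<lambda>x. if \<exists>f\<in>F. x \<in> dom f then (SOME f. f \<in> F \<and> x \<in> dom f) x else None)"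

definition vee_prime :: "('a \<rightharpoonup> 'b) set \<Rightarrow> bool" where
  "vee_prime \<Theta> \<longleftrightarrow> (\<forall>F. F \<subseteq> \<Theta> \<longrightarrow> compatible F \<longrightarrow> join F \<in> \<Theta> \<longrightarrow> join F \<in> F)"

end

theory Submission
  imports Defs
begin

lemma join_dom: "dom (join F) = (\<Union>f\<in>F. dom f)"
proof -
  have "join F x \<noteq> None" if "f \<in> F" "x \<in> dom f" for f x
  proof -
    have "\<exists>g. g \<in> F \<and> x \<in> dom g" using that by blast
    hence "(SOME g. g \<in> F \<and> x \<in> dom g) \<in> F \<and> x \<in> dom (SOME g. g \<in> F \<and> x \<in> dom g)"
      by (rule someI_ex)
    thus ?thesis using that unfolding join_def by auto
  qed
  moreover have "join F x = None" if "\<forall>f\<in>F. x \<notin> dom f" for x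
    using that unfolding join_def by auto
  ultimately show ?thesis
    by (smt (verit, best) UN_iff domIff subsetI subset_antisym)
qed

lemma join_val:
  assumes "compatible F" "f \<in> F" "x \<in> dom f"
  shows "join F x = f x"
proof -
  have "\<exists>g. g \<in> F \<and> x \<in> dom g" using assms by blast
  hence s: "(SOME g. g \<in> F \<and> x \<in> dom g) \<in> F \<and> x \<in> dom (SOME g. g \<in> F \<and> x \<in> dom g)"
    by (rule someI_ex)
  have "join F x = (SOME g. g \<in> F \<and> x \<in> dom g) x" unfolding join_def using assms by auto
  also have "\<dots> = f x" using assms(1) s assms(2,3) unfolding compatible_def by blast
  finally show ?thesis .
qed

theorem proposition3:
  fixes E :: "'a set" and le :: "'a \<Rightarrow> 'a \<Rightarrow> bool" and I :: "'a \<Rightarrow> 'b set"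
  assumes "finite E"
    and "causal_order E le"
    and "\<forall>w\<in>E. I w \<noteq> {} \<and> finite (I w)"
  shows "Hist E le I \<subseteq> partial_funs E I \<and> vee_prime (Hist E le I)"
proof
  show "Hist E le I \<subseteq> partial_funs E I"
    unfolding Hist_def partial_funs_def down_def by auto
  show "vee_prime (Hist E le I)"
    unfolding vee_prime_def
  proof (intro allI impI)
    fix F assume FH: "F \<subseteq> Hist E le I" and c: "compatible F" and jH: "join F \<in> Hist E le I"
    from jH obtain xi where xi: "xi \<in> E" "dom (join F) = down E le xi"
      unfolding Hist_def by auto
    have "xi \<in> down E le xi" using xi(1) assms(2) unfolding down_def causal_order_def by auto
    then obtain f where f: "f \<in> F" "xi \<in> dom f" using xi(2) join_dom[of F] by blast
    from f FH obtain xi' where xi': "xi' \<in> E" "dom f = down E le xi'"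
      unfolding Hist_def by auto
    have "down E le xi \<subseteq> down E le xi'"
      using f(2) xi' xi(1) assms(2) unfolding down_def causal_order_def by blast
    moreover have "dom f \<subseteq> dom (join F)" using f join_dom[of F] by auto
    ultimately have d: "dom f = dom (join F)" using xi xi' by auto
    have "join F = f"
    proof
      fix x show "join F x = f x"
      proof (cases "x \<in> dom f")
        case True thus ?thesis using join_val[OF c f(1)] by auto
      next
        case False thus ?thesis using d by (metis domIff)
      qed
    qed
    thus "join F \<in> F" using f by simp
  qed
qed

end
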